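(* Let $\rho$ be an admissible function on an RD-space $\mathcal X$, and let $\{\tilde T_t\}_{t>0}$ (a continuous $(\epsilon_1,\epsilon_2,\epsilon_3)$-AOTI) and $\{T_t\}_{t>0}$ (bounded linear operators on $L^2(\mathcal X)$ with integrable kernels) satisfy, for some $C>0$, $\delta_2\in(0,\epsilon_2]$, $\delta_1,\delta_3>0$ and all $t>0$, $x,y$: (i) $|T_t(x,y)|\le C\frac{1}{V_t(x)+V(x,y)}\big[\frac{t}{t+d(x,y)}\big]^{\delta_2}\big[\frac{\rho(x)}{t+\rho(x)}\big]^{\delta_3}$; (ii) $|T_t(x,y)-\tilde T_t(x,y)|\le C\big[\frac{t}{t+\rho(x)}\big]^{\delta_1}\frac{1}{V_t(x)+V(x,y)}\big[\frac{t}{t+d(x,y)}\big]^{\delta_2}$. Set $E_t=T_t-\tilde T_t$ and $E^+_\rho(f)(x)=\sup_{0<t<\rho(x)}|E_t(f)(x)|$. Then there is $C'>0$ such that $\|E^+_\rho(f)\|_{L^1(\mathcal X)}\le C'\|f\|_{L^1(\mathcal X)}$ for all $f\in L^1(\mathcal X)$.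
   Context: An RD-space is a triple $(\mathcal X,d,\mu)$ where $(\mathcal X,d)$ is a metric space and $\mu$ a regular Borel measure such that every ball $B(x,r)=\{y:d(x,y)<r\}$ has finite positive measure, $\mu$ is doubling, and there exist constants $0<\kappa\le n$, $C_2\ge1$ with $C_2^{-1}\lambda^\kappa\mu(B(x,r))\le\mu(B(x,\lambda r))\le C_2\lambda^n\mu(B(x,r))$ for all $x$, $0<r<\operatorname{diam}(\mathcal X)/2$, $1\le\lambda<\operatorname{diam}(\mathcal X)/(2r)$; $\mu(\mathcal X)=\infty$. $V_r(x)=\mu(B(x,r))$, $V(x,y)=\mu(B(x,d(x,y)))$. A positive function $\rho$ on $\mathcal X$ is admissible if there exist constants $C_3,k_0>0$ such that for all $x,y$, $\rho(y)\le C_3[\rho(x)]^{1/(1+k_0)}[\rho(x)+d(x,y)]^{k_0/(1+k_0)}$. Continuous AOTI: for $\epsilon_1\in(0,1]$, $\epsilon_2,\epsilon_3>0$, a family $\{\tilde S_t\}_{t>0}$ of bounded linear integral operators on $L^2(\mathcal X)$ with kernels $\tilde S_t(x,y)$ is a continuous $(\epsilon_1,\epsilon_2,\epsilon_3)$-AOTI if there is $C_6>0$ such that for all $t>0$ and $x,x',y,y'$: (i) $|\tilde S_t(x,y)|\le C_6\frac{1}{V_t(x)+V(x,y)}\big[\frac{t}{t+d(x,y)}\big]^{\epsilon_2}$; (ii) $|\tilde S_t(x,y)-\tilde S_t(x',y)|\le C_6\big[\frac{d(x,x')}{t+d(x,y)}\big]^{\epsilon_1}\frac{1}{V_t(x)+V(x,y)}\big[\frac{t}{t+d(x,y)}\big]^{\epsilon_2}$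 for $d(x,x')\le[t+d(x,y)]/2$; (iii) the same with $x$ and $y$ interchanged; (iv) $|[\tilde S_t(x,y)-\tilde S_t(x,y')]-[\tilde S_t(x',y)-\tilde S_t(x',y')]|\le C_6\big[\frac{d(x,x')}{t+d(x,y)}\big]^{\epsilon_1}\big[\frac{d(y,y')}{t+d(x,y)}\big]^{\epsilon_1}\frac{1}{V_t(x)+V(x,y)}\big[\frac{t}{t+d(x,y)}\big]^{\epsilon_3}$ for $d(x,x')\le[t+d(x,y)]/3$, $d(y,y')\le[t+d(x,y)]/3$; (v) $\int\tilde S_t(x,z)\,d\mu(z)=1=\int\tilde S_t(z,y)\,d\mu(z)$. *)

theory Defs
  imports "HOL-Analysis.Analysis"
begin

definition Vr :: "'a::metric_space measure \<Rightarrow> 'a \<Rightarrow> real \<Rightarrow> real" where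
  "Vr M x r = measure M (ball x r)"

definition Vxy :: "'a::metric_space measure \<Rightarrow> 'a \<Rightarrow> 'a \<Rightarrow> real" where
  "Vxy M x y = measure M (ball x (dist x y))"

definition diamX :: "'a::metric_space itself \<Rightarrow> ereal" where
  "diamX _ = (SUP x\<in>(UNIV::'a set). SUP y\<in>(UNIV::'a set). ereal (dist x y))"

definition RD_space :: "'a::metric_space measure \<Rightarrow> bool" where
  "RD_space M \<longleftrightarrow>
     space M = UNIV \<and> sets M = sets borel \<and>
     (\<forall>x r. r > 0 \<longrightarrow> 0 < emeasure M (ball x r) \<and> emeasure M (ball x r) < \<infinity>) \<and>
     (\<forall>A\<in>sets M. emeasure M A = (INF U\<in>{U. open U \<and> A \<subseteq> U}. emeasure M U)) \<and>
     (\<exists>C1. \<forall>x r. r > 0 \<longrightarrow> emeasure M (ball x (2*r)) \<le> ennreal C1 * emeasure M (ball x r)) \<and>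
     (\<exists>\<kappa> n C2. 0 < \<kappa> \<and> \<kappa> \<le> n \<and> 1 \<le> C2 \<and>
        (\<forall>x r lam. 0 < r \<and> ereal (2*r) < diamX TYPE('a) \<and> 1 \<le> lam \<and>
             ereal (2*r*lam) < diamX TYPE('a) \<longrightarrow>
           (1/C2) * lam powr \<kappa> * Vr M x r \<le> Vr M x (lam*r) \<and>
           Vr M x (lam*r) \<le> C2 * lam powr n * Vr M x r)) \<and>
     emeasure M (space M) = \<infinity>"

definition admissible :: "('a::metric_space \<Rightarrow> real) \<Rightarrow> bool" where
  "admissible \<rho> \<longleftrightarrow> (\<forall>x. 0 < \<rho> x) \<and>
     (\<exists>C3 k0. 0 < C3 \<and> 0 < k0 \<and> (\<forall>x y.
        \<rho> y \<le> C3 * \<rho> x powr (1/(1+k0)) * (\<rho> x + dist x y) powr (k0/(1+k0))))"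

definition L2_kernel_operator :: "'a::metric_space measure \<Rightarrow> ('a \<Rightarrow> 'a \<Rightarrow> real) \<Rightarrow> bool" where
  "L2_kernel_operator M K \<longleftrightarrow>
     (\<lambda>(x,y). K x y) \<in> borel_measurable (M \<Otimes>\<^sub>M M) \<and>
     (\<exists>C. \<forall>f. f \<in> borel_measurable M \<and> integrable M (\<lambda>y. (f y)^2) \<longrightarrow>
        (AE x in M. integrable M (\<lambda>y. K x y * f y)) \<and>
        (\<integral>\<^sup>+x. ennreal ((\<integral>y. K x y * f y \<partial>M)^2) \<partial>M) \<le> ennreal C * (\<integral>\<^sup>+y. ennreal ((f y)^2) \<partial>M))"

definition dec :: "'a::metric_space measure \<Rightarrow> real \<Rightarrow> 'a \<Rightarrow> 'a \<Rightarrow> real \<Rightarrow> real" where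
  "dec M t x y a = 1 / (Vr M x t + Vxy M x y) * (t / (t + dist x y)) powr a"

definition cont_AOTI :: "'a::metric_space measure \<Rightarrow> real \<Rightarrow> real \<Rightarrow> real \<Rightarrow>
    (real \<Rightarrow> 'a \<Rightarrow> 'a \<Rightarrow> real) \<Rightarrow> bool" where
  "cont_AOTI M e1 e2 e3 S \<longleftrightarrow>
     0 < e1 \<and> e1 \<le> 1 \<and> 0 < e2 \<and> 0 < e3 \<and>
     (\<forall>t>0. L2_kernel_operator M (S t)) \<and>
     (\<exists>C6>0. \<forall>t>0. \<forall>x x' y y'.
        \<bar>S t x y\<bar> \<le> C6 * dec M t x y e2 \<and>
        (dist x x' \<le> (t + dist x y) / 2 \<longrightarrow>
           \<bar>S t x y - S t x' y\<bar> \<le> C6 * (dist x x' / (t + dist x y)) powr e1 * dec M t x y e2) \<and>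
        (dist y y' \<le> (t + dist x y) / 2 \<longrightarrow>
           \<bar>S t x y - S t x y'\<bar> \<le> C6 * (dist y y' / (t + dist x y)) powr e1 * dec M t x y e2) \<and>
        (dist x x' \<le> (t + dist x y) / 3 \<and> dist y y' \<le> (t + dist x y) / 3 \<longrightarrow>
           \<bar>(S t x y - S t x y') - (S t x' y - S t x' y')\<bar> \<le>
             C6 * (dist x x' / (t + dist x y)) powr e1 * (dist y y' / (t + dist x y)) powr e1
                * dec M t x y e3) \<and>
        (\<integral>z. S t x z \<partial>M) = 1 \<and> (\<integral>z. S t z y \<partial>M) = 1)"

end

theory Submission
  imports Defs
begin

lemma rd_sets: "RD_space (M::'a::metric_space measure) \<Longrightarrow> sets M = sets borel"
  unfolding RD_space_def by blast
lemma rd_space: "RD_space (M::'a::metric_space measure) \<Longrightarrow> space M = UNIV"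
  unfolding RD_space_def by blast
lemma rd_ball_sets: "RD_space (M::'a::metric_space measure) \<Longrightarrow> ball x r \<in> sets M"
  using rd_sets by (metis borel_open open_ball)
lemma rd_ball_em: "RD_space (M::'a::metric_space measure) \<Longrightarrow> r > 0 \<Longrightarrow>
   0 < emeasure M (ball x r) \<and> emeasure M (ball x r) < \<infinity>"
  unfolding RD_space_def by blast
lemma rd_univ: "RD_space (M::'a::metric_space measure) \<Longrightarrow> emeasure M UNIV = \<infinity>"
  unfolding RD_space_def by (metis)

lemma rd_ball_fin: fixes M :: "'a::metric_space measure" assumes "RD_space M" shows "ball x r \<in> fmeasurable M"
proof (cases "r > 0")
  case True
  then show ?thesis using rd_ball_em[OF assms True] rd_ball_sets[OF assms] unfolding fmeasurable_def by blast
next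
  case False
  then have e: "ball x r = {}" by auto
  show ?thesis unfolding e by (simp add: fmeasurable_def)
qed

lemma rd_ball_pos: fixes M :: "'a::metric_space measure" assumes "RD_space M" "r > 0" shows "0 < measure M (ball x r)"
proof -
  have "0 < emeasure M (ball x r)" "emeasure M (ball x r) < \<infinity>"
    using rd_ball_em[OF assms] by auto
  then have "emeasure M (ball x r) = ennreal (measure M (ball x r))"
    by (intro emeasure_eq_ennreal_measure) (use \<open>emeasure M (ball x r) < \<infinity>\<close> in auto)
  then show ?thesis using \<open>0 < emeasure M (ball x r)\<close> by simp
qed

lemma rd_mono: fixes M :: "'a::metric_space measure" assumes "RD_space M" "ball x r \<subseteq> ball y s"
  shows "measure M (ball x r) \<le> measure M (ball y s)"
  using measure_mono_fmeasurable[OF assms(2) rd_ball_sets[OF assms(1)] rd_ball_fin[OF assms(1)]] .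

lemma rd_diam: fixes M :: "'a::metric_space measure" assumes "RD_space M" shows "ereal c < diamX TYPE('a::metric_space)"
proof (rule ccontr)
  assume "\<not> ereal c < diamX TYPE('a)"
  then have le: "dist x y \<le> c" for x y :: 'a
  proof -
    have "ereal (dist x y) \<le> diamX TYPE('a)" unfolding diamX_def
      by (meson SUP_upper UNIV_I order_trans order_refl)
    then show ?thesis using \<open>\<not> ereal c < diamX TYPE('a)\<close> by (meson ereal_less_eq(3) le_less_trans not_le)
  qed
  obtain x0 :: 'a where True by simp
  have "UNIV = ball x0 (\<bar>c\<bar>+1)"
  proof (intro set_eqI iffI)
    fix y :: 'a
    have "dist x0 y < \<bar>c\<bar>+1" using le[of x0 y] by linarith
    then show "y \<in> ball x0 (\<bar>c\<bar>+1)" by simp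
  qed simp
  moreover have "emeasure M (ball x0 (\<bar>c\<bar>+1)) < \<infinity>"
    using rd_ball_em[OF assms, of "\<bar>c\<bar>+1"] by simp
  ultimately have "emeasure M (UNIV::'a set) < \<infinity>" by simp
  then show False using rd_univ[OF assms] by auto
qed



lemma rd_consts: fixes M :: "'a::metric_space measure" assumes "RD_space M"
  shows "\<exists>\<kappa> N C2. 0<\<kappa> \<and> \<kappa>\<le>N \<and> 1\<le>C2 \<and> (\<forall>x r lam. 0<r \<and> 1\<le>lam \<longrightarrow>
     (1/C2)*lam powr \<kappa> * Vr M x r \<le> Vr M x (lam*r) \<and> Vr M x (lam*r) \<le> C2*lam powr N * Vr M x r)"
proof -
  obtain \<kappa> N C2 where h: "0 < \<kappa>" "\<kappa> \<le> N" "1 \<le> C2" and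
    b: "\<And>x r lam. 0 < r \<and> ereal (2*r) < diamX TYPE('a) \<and> 1 \<le> lam \<and>
             ereal (2*r*lam) < diamX TYPE('a) \<Longrightarrow>
           (1/C2) * lam powr \<kappa> * Vr M x r \<le> Vr M x (lam*r) \<and>
           Vr M x (lam*r) \<le> C2 * lam powr N * Vr M x r"
  proof -
    have "\<exists>\<kappa> n C2. 0 < \<kappa> \<and> \<kappa> \<le> n \<and> 1 \<le> C2 \<and>
        (\<forall>x r lam. 0 < r \<and> ereal (2*r) < diamX TYPE('a) \<and> 1 \<le> lam \<and>
             ereal (2*r*lam) < diamX TYPE('a) \<longrightarrow>
           (1/C2) * lam powr \<kappa> * Vr M x r \<le> Vr M x (lam*r) \<and>
           Vr M x (lam*r) \<le> C2 * lam powr n * Vr M x r)"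
      using assms unfolding RD_space_def by (elim conjE) assumption
    then show ?thesis using that by blast
  qed
  have "\<forall>x r lam. 0<r \<and> 1\<le>lam \<longrightarrow>
     (1/C2)*lam powr \<kappa> * Vr M x r \<le> Vr M x (lam*r) \<and> Vr M x (lam*r) \<le> C2*lam powr N * Vr M x r"
  proof (intro allI impI)
    fix x and r lam :: real assume a: "0 < r \<and> 1 \<le> lam"
    show "(1/C2)*lam powr \<kappa> * Vr M x r \<le> Vr M x (lam*r) \<and> Vr M x (lam*r) \<le> C2*lam powr N * Vr M x r"
      by (rule b) (use a rd_diam[OF assms] in auto)
  qed
  then show ?thesis using h by blast
qed


lemma rd_separable: fixes M :: "'a::metric_space measure" assumes rd: "RD_space M"
  shows "\<exists>D::'a set. countable D \<and> (\<forall>z e. e>0 \<longrightarrow> (\<exists>q\<in>D. dist z q < e))"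
proof -
  obtain \<kappa> N C2 where h: "0 < \<kappa>" "\<kappa> \<le> N" "1 \<le> C2" and
    up: "\<And>x r lam. 0<r \<Longrightarrow> 1\<le>lam \<Longrightarrow> Vr M x (lam*r) \<le> C2*lam powr N * Vr M x r"
    using rd_consts[OF rd] by blast
  obtain x0 :: 'a where True by simp
  define sep where "sep R e S \<longleftrightarrow> finite S \<and> S \<subseteq> ball x0 R \<and> (\<forall>a\<in>S. \<forall>b\<in>S. a\<noteq>b \<longrightarrow> e \<le> dist a b)"
    for R e :: real and S :: "'a set"
  have pack: "real (card S) \<le> C2 * ((2*R+e)/(e/2)) powr N" if "sep R e S" "R > 0" "e > 0" for R e S
  proof -
    define lam where "lam = (2*R+e)/(e/2)"
    have lam1: "1 \<le> lam" using that unfolding lam_def by (simp add: field_simps)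
    have fS: "finite S" and sub: "S \<subseteq> ball x0 R" and sp: "\<forall>a\<in>S. \<forall>b\<in>S. a\<noteq>b \<longrightarrow> e \<le> dist a b"
      using that(1) unfolding sep_def by auto
    define V where "V = measure M (ball x0 (R+e))"
    have Vpos: "0 < V" unfolding V_def using rd_ball_pos[OF rd] that by simp
    have each: "V \<le> C2 * lam powr N * measure M (ball s (e/2))" if "s \<in> S" for s
    proof -
      have "ball x0 (R+e) \<subseteq> ball s (lam*(e/2))"
      proof
        fix z assume "z \<in> ball x0 (R+e)"
        moreover have "dist x0 s < R" using sub that by auto
        ultimately have "dist x0 z < R+e" "dist s x0 < R" by (auto simp: dist_commute)
        moreover have "dist s z \<le> dist s x0 + dist x0 z" by (rule dist_triangle)
        ultimately have "dist s z < 2*R+e" by linarith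
        then show "z \<in> ball s (lam*(e/2))" unfolding lam_def using \<open>e>0\<close> by simp
      qed
      then have "V \<le> Vr M s (lam*(e/2))" unfolding V_def Vr_def by (rule rd_mono[OF rd])
      also have "\<dots> \<le> C2 * lam powr N * Vr M s (e/2)" by (rule up) (use \<open>e>0\<close> lam1 in auto)
      finally show ?thesis unfolding Vr_def .
    qed
    have disj: "pairwise (\<lambda>i j. disjnt (ball i (e/2)) (ball j (e/2))) S"
    proof (rule pairwiseI)
      fix a b assume "a \<in> S" "b \<in> S" "a \<noteq> b"
      then have "e \<le> dist a b" using sp by auto
      have "False" if "z \<in> ball a (e/2)" "z \<in> ball b (e/2)" for z
      proof -
        have "dist a z < e/2" "dist b z < e/2" using that by auto
        moreover have "dist a b \<le> dist a z + dist b z" by (metis dist_commute dist_triangle)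
        ultimately show False using \<open>e \<le> dist a b\<close> by linarith
      qed
      then show "disjnt (ball a (e/2)) (ball b (e/2))" unfolding disjnt_def by blast
    qed
    have "(\<Sum>s\<in>S. measure M (ball s (e/2))) = measure M (\<Union>s\<in>S. ball s (e/2))"
      by (rule measure_UNION'[symmetric]) (use fS disj rd_ball_fin[OF rd] in auto)
    also have "\<dots> \<le> V" unfolding V_def
    proof (rule measure_mono_fmeasurable)
      show "(\<Union>s\<in>S. ball s (e/2)) \<subseteq> ball x0 (R+e)"
      proof safe
        fix s z assume "s \<in> S" "z \<in> ball s (e/2)"
        then have "dist x0 s < R" "dist s z < e/2" using sub by auto
        moreover have "dist x0 z \<le> dist x0 s + dist s z" by (rule dist_triangle)
        ultimately show "z \<in> ball x0 (R+e)" using \<open>e>0\<close> by simp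
      qed
      show "(\<Union>s\<in>S. ball s (e/2)) \<in> sets M"
        using fS by (intro sets.finite_UN) (auto simp: rd_ball_sets[OF rd])
    qed (rule rd_ball_fin[OF rd])
    finally have sumle: "(\<Sum>s\<in>S. measure M (ball s (e/2))) \<le> V" .
    have "real (card S) * (V / (C2 * lam powr N)) = (\<Sum>s\<in>S. V / (C2 * lam powr N))" by simp
    also have "\<dots> \<le> (\<Sum>s\<in>S. measure M (ball s (e/2)))"
    proof (rule sum_mono)
      fix s assume "s \<in> S"
      have "0 < C2 * lam powr N" using h lam1 by simp
      then show "V / (C2 * lam powr N) \<le> measure M (ball s (e/2))"
        using each[OF \<open>s\<in>S\<close>] by (simp add: divide_le_eq mult.commute)
    qed
    also have "\<dots> \<le> V" by (rule sumle)
    finally have "real (card S) * (V / (C2 * lam powr N)) \<le> V" .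
    then have "real (card S) * V \<le> V * (C2 * lam powr N)"
      using h lam1 by (simp add: field_simps)
    then show ?thesis using Vpos unfolding lam_def[symmetric] by (simp add: mult.commute)
  qed
  have maxi: "\<exists>S. sep R e S \<and> (\<forall>z\<in>ball x0 R. \<exists>s\<in>S. dist z s < e)" if "R > 0" "e > 0" for R e
  proof -
    define b where "b = nat \<lceil>C2 * ((2*R+e)/(e/2)) powr N\<rceil> + 1"
    have "sep R e {}" unfolding sep_def by simp
    moreover have "\<forall>S. sep R e S \<longrightarrow> card S < b"
    proof safe
      fix S assume "sep R e S"
      from pack[OF this that] show "card S < b" unfolding b_def by linarith
    qed
    ultimately obtain S where S: "sep R e S" and mx: "\<forall>T. sep R e T \<longrightarrow> card T \<le> card S"
      using ex_has_greatest_nat[of "sep R e" "{}" card b] by blast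
    have "\<forall>z\<in>ball x0 R. \<exists>s\<in>S. dist z s < e"
    proof (rule ccontr)
      assume "\<not> ?thesis"
      then obtain z where z: "z \<in> ball x0 R" "\<forall>s\<in>S. e \<le> dist z s" by (auto simp: not_less)
      then have zn: "z \<notin> S" using \<open>e>0\<close> by force
      have "sep R e (insert z S)" using S z unfolding sep_def by (auto simp: dist_commute)
      then have "card (insert z S) \<le> card S" using mx by blast
      then show False using zn S unfolding sep_def by simp
    qed
    then show ?thesis using S by blast
  qed
  define F where "F = (\<lambda>(n::nat,m::nat). SOME S. sep (real n+1) (1/(real m+1)) S \<and>
       (\<forall>z\<in>ball x0 (real n+1). \<exists>s\<in>S. dist z s < 1/(real m+1)))"
  have F: "sep (real n+1) (1/(real m+1)) (F (n,m)) \<and>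
       (\<forall>z\<in>ball x0 (real n+1). \<exists>s\<in>F (n,m). dist z s < 1/(real m+1))" for n m
    unfolding F_def case_prod_conv by (rule someI_ex) (rule maxi; simp)
  define D where "D = (\<Union>p\<in>UNIV. F p)"
  have "countable D" unfolding D_def
    by (intro countable_UN) (use F in \<open>auto simp: sep_def intro: countable_finite\<close>)
  moreover have "\<forall>z e. e>0 \<longrightarrow> (\<exists>q\<in>D. dist z q < e)"
  proof safe
    fix z :: 'a and e :: real assume "e > 0"
    obtain m :: nat where m: "1/(real m+1) < e" using \<open>e>0\<close>
      by (metis add.commute nat_approx_posE of_nat_Suc)
    obtain n :: nat where n: "dist x0 z < real n + 1"
      by (metis add.commute less_add_one real_arch_simple order_le_less_trans)
    have "z \<in> ball x0 (real n+1)" using n by simp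
    then obtain s where "s \<in> F (n,m)" "dist z s < 1/(real m+1)" using F[of n m] by blast
    then show "\<exists>q\<in>D. dist z q < e" unfolding D_def using m by force
  qed
  ultimately show ?thesis by blast
qed



lemma open_pair_sets: fixes M :: "'a::metric_space measure" and D :: "'a set"
  assumes rd: "RD_space M" and Dc: "countable D" and Dd: "\<forall>z e. e>0 \<longrightarrow> (\<exists>q\<in>D. dist z q < e)"
    and U: "open (U :: ('a\<times>'a) set)"
  shows "U \<in> sets (M \<Otimes>\<^sub>M M)"
proof -
  define I where "I = {(q,p,s). q\<in>D \<and> p\<in>D \<and> s\<in>\<rat> \<and> 0<s \<and> ball q s \<times> ball p s \<subseteq> U}"
  define R where "R = (\<lambda>(q::'a,p::'a,s::real). ball q s \<times> ball p s)"
  have cI: "countable I"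
    by (rule countable_subset[of _ "D \<times> (D \<times> \<rat>)"]) (use Dc countable_rat in \<open>auto simp: I_def\<close>)
  have RI: "R ` I \<subseteq> sets (M \<Otimes>\<^sub>M M)"
    by (auto simp: R_def intro!: pair_measureI rd_ball_sets[OF rd])
  have "U = \<Union>(R ` I)"
  proof
    show "\<Union>(R ` I) \<subseteq> U" by (auto simp: R_def I_def)
  next
    show "U \<subseteq> \<Union>(R ` I)"
    proof
      fix w assume "w \<in> U"
      obtain x y where w: "w = (x,y)" by (cases w)
      obtain A B where AB: "open A" "open B" "(x,y) \<in> A \<times> B" "A \<times> B \<subseteq> U"
        using open_prod_elim[OF U \<open>w\<in>U\<close>[unfolded w]] by metis
      obtain e1 where e1: "e1 > 0" "ball x e1 \<subseteq> A" using AB openE by (metis mem_Sigma_iff)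
      obtain e2 where e2: "e2 > 0" "ball y e2 \<subseteq> B" using AB openE by (metis mem_Sigma_iff)
      define e where "e = min e1 e2"
      have e: "e > 0" using e1 e2 by (simp add: e_def)
      obtain s where s: "s \<in> \<rat>" "0 < s" "s < e/2" using Rats_dense_in_real[of 0 "e/2"] e by auto
      obtain q where q: "q \<in> D" "dist x q < s" using Dd s by blast
      obtain p where p: "p \<in> D" "dist y p < s" using Dd s by blast
      have bq: "ball q s \<subseteq> A"
      proof
        fix z assume "z \<in> ball q s"
        then have "dist q z < s" by simp
        moreover have "dist x z \<le> dist x q + dist q z" by (rule dist_triangle)
        ultimately have "dist x z < e1" using q s unfolding e_def by linarith
        then show "z \<in> A" using e1 by auto
      qed
      have bp: "ball p s \<subseteq> B"
      proof
        fix z assume "z \<in> ball p s"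
        then have "dist p z < s" by simp
        moreover have "dist y z \<le> dist y p + dist p z" by (rule dist_triangle)
        ultimately have "dist y z < e2" using p s unfolding e_def by linarith
        then show "z \<in> B" using e2 by auto
      qed
      have "(q,p,s) \<in> I" unfolding I_def using q p s bq bp AB(4) by blast
      moreover have "w \<in> R (q,p,s)" unfolding R_def w using q p by (simp add: dist_commute)
      ultimately show "w \<in> \<Union>(R ` I)" by blast
    qed
  qed
  also have "\<dots> \<in> sets (M \<Otimes>\<^sub>M M)" by (rule sets.countable_UN'[OF cI RI])
  finally show ?thesis .
qed

lemma lsc_pair_meas: fixes M :: "'a::metric_space measure" and D :: "'a set"
  assumes rd: "RD_space M" and Dc: "countable D" and Dd: "\<forall>z e. e>0 \<longrightarrow> (\<exists>q\<in>D. dist z q < e)"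
    and o: "\<And>a. open {p. a < f p}"
  shows "(f :: 'a\<times>'a \<Rightarrow> real) \<in> borel_measurable (M \<Otimes>\<^sub>M M)"
  unfolding borel_measurable_iff_greater space_pair_measure rd_space[OF rd]
  using open_pair_sets[OF rd Dc Dd o] by simp

lemma dist_pair_meas: fixes M :: "'a::metric_space measure" and D :: "'a set"
  assumes rd: "RD_space M" and Dc: "countable D" and Dd: "\<forall>z e. e>0 \<longrightarrow> (\<exists>q\<in>D. dist z q < e)"
  shows "(\<lambda>p. dist (fst p) (snd p)) \<in> borel_measurable (M \<Otimes>\<^sub>M M)"
proof (rule lsc_pair_meas[OF rd Dc Dd])
  fix a
  show "open {p::'a\<times>'a. a < dist (fst p) (snd p)}"
    by (intro open_Collect_less continuous_intros)
qed



lemma rd_emeas_ball: fixes M :: "'a::metric_space measure" assumes rd: "RD_space M"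
  shows "emeasure M (ball x r) = ennreal (measure M (ball x r))"
  using emeasure_eq_measure2[OF rd_ball_fin[OF rd]] .

lemma ballmeas_open: fixes M :: "'a::metric_space measure" assumes rd: "RD_space M"
  shows "open {p::'a\<times>'a. a < measure M (ball (snd p) (dist (fst p) (snd p)))}"
proof (cases "a < 0")
  case True
  then have "{p::'a\<times>'a. a < measure M (ball (snd p) (dist (fst p) (snd p)))} = UNIV"
    using measure_nonneg[of M] by (auto intro: less_le_trans)
  then show ?thesis by simp
next
  case False
  then have a0: "0 \<le> a" by simp
  show ?thesis
  proof (rule openI)
    fix p :: "'a\<times>'a" assume "p \<in> {p. a < measure M (ball (snd p) (dist (fst p) (snd p)))}"
    then obtain x y where p: "p = (x,y)" and ay: "a < measure M (ball y (dist x y))"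
      by (cases p) auto
    define d where "d = dist x y"
    have d0: "d > 0"
    proof (rule ccontr)
      assume "\<not> d > 0"
      then have "ball y d = {}" by auto
      then show False using ay a0 unfolding d_def by simp
    qed
    define A where "A = (\<lambda>n::nat. ball y (d - d/(real n+2)))"
    have inc: "incseq A" unfolding A_def
    proof (rule incseq_SucI)
      fix n
      have "d/(real (Suc n)+2) \<le> d/(real n+2)" using d0 by (intro divide_left_mono) auto
      then show "ball y (d - d/(real n+2)) \<subseteq> ball y (d - d/(real (Suc n)+2))" by (auto)
    qed
    have U: "(\<Union>n. A n) = ball y d"
    proof
      show "(\<Union>n. A n) \<subseteq> ball y d" unfolding A_def
      proof safe
        fix z n assume "z \<in> ball y (d - d / (real n + 2))"
        moreover have "0 \<le> d / (real n + 2)" using d0 by simp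
        ultimately show "z \<in> ball y d" by simp
      qed
    next
      show "ball y d \<subseteq> (\<Union>n. A n)"
      proof
        fix z assume "z \<in> ball y d"
        then have g: "0 < d - dist y z" by simp
        obtain n :: nat where n0: "d / (d - dist y z) < real n" using reals_Archimedean2 by blast
        then have n: "d / (d - dist y z) < real n + 2" by linarith
        have "d/(real n+2) < d - dist y z" using n g d0 by (simp add: field_simps)
        then have "dist y z < d - d/(real n+2)" by linarith
        then show "z \<in> (\<Union>n. A n)" unfolding A_def by auto
      qed
    qed
    have "(\<lambda>i. emeasure M (A i)) \<longlonglongrightarrow> emeasure M (ball y d)"
    proof -
      have "range A \<subseteq> sets M" unfolding A_def using rd_ball_sets[OF rd] by blast
      from Lim_emeasure_incseq[OF this inc] show ?thesis unfolding U .
    qed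
    moreover have "ennreal a < emeasure M (ball y d)" using ay a0 unfolding d_def rd_emeas_ball[OF rd] 
      by (simp add: ennreal_less_iff)
    ultimately have "eventually (\<lambda>i. ennreal a < emeasure M (A i)) sequentially"
      by (rule order_tendstoD(1))
    then obtain n where "ennreal a < emeasure M (A n)" by (meson eventually_sequentially order_refl)
    then have an: "a < measure M (ball y (d - d/(real n+2)))"
      unfolding A_def rd_emeas_ball[OF rd] using a0 by (simp add: ennreal_less_iff)
    define e where "e = d/(real n+2)"
    have e0: "e > 0" using d0 by (simp add: e_def)
    show "\<exists>e>0. ball p e \<subseteq> {p. a < measure M (ball (snd p) (dist (fst p) (snd p)))}"
    proof (intro exI conjI)
      show "e/4 > 0" using e0 by simp
      show "ball p (e/4) \<subseteq> {p. a < measure M (ball (snd p) (dist (fst p) (snd p)))}"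
      proof
        fix p' assume "p' \<in> ball p (e/4)"
        then have pp: "dist p p' < e/4" by simp
        obtain x' y' where p': "p' = (x',y')" by (cases p')
        have dx: "dist x x' < e/4" using dist_fst_le[of p p'] pp unfolding p p' by simp
        have dy: "dist y y' < e/4" using dist_snd_le[of p p'] pp unfolding p p' by simp
        have sub: "ball y (d - e) \<subseteq> ball y' (dist x' y')"
        proof
          fix z assume "z \<in> ball y (d-e)"
          then have "dist y z < d - e" by simp
          moreover have "dist y' z \<le> dist y' y + dist y z" by (rule dist_triangle)
          moreover have "dist x y \<le> dist x x' + dist x' y" by (rule dist_triangle)
          moreover have "dist x' y \<le> dist x' y' + dist y' y" by (rule dist_triangle)
          moreover have "dist x x' = dist x' x" "dist y y' = dist y' y" by (simp_all add: dist_commute)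
          ultimately have "dist y' z < dist x' y'" using dx dy e0 unfolding d_def by linarith
          then show "z \<in> ball y' (dist x' y')" by simp
        qed
        have "a < measure M (ball y (d - e))" using an unfolding e_def .
        also have "\<dots> \<le> measure M (ball y' (dist x' y'))" by (rule rd_mono[OF rd sub])
        finally show "p' \<in> {p. a < measure M (ball (snd p) (dist (fst p) (snd p)))}" unfolding p' by simp
      qed
    qed
  qed
qed



lemma le_C2: "1 \<le> (c::real) \<Longrightarrow> 0 \<le> x \<Longrightarrow> x \<le> c*x"
  by (metis mult_right_mono mult_1)


lemma P1:
  fixes t rho d V W C2 \<kappa> \<delta>1 \<delta>2 :: real
  assumes t: "t > 0" "t < rho" and d: "d > 0" and V: "V > 0" and W: "W > 0" and C2: "C2 \<ge> 1"
    and k: "\<kappa> > 0" and d1: "\<delta>1 > 0" and d2: "\<delta>2 > 0"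
    and rd: "d < t \<Longrightarrow> (1/C2)*(t/d) powr \<kappa> * V \<le> W"
  shows "(t/(t+rho)) powr \<delta>1 * (1/(W+V) * (t/(t+d)) powr \<delta>2)
     \<le> C2 * min (d/rho) (rho/d) powr (min \<delta>1 (min \<delta>2 \<kappa>)) / V"
proof -
  define \<theta> where "\<theta> = min \<delta>1 (min \<delta>2 \<kappa>)"
  have th: "0 < \<theta>" "\<theta> \<le> \<delta>1" "\<theta> \<le> \<delta>2" "\<theta> \<le> \<kappa>" using d1 d2 k by (auto simp: \<theta>_def)
  have rho: "rho > 0" using t by simp
  have iWV: "1/(W+V) \<le> 1/V" using V W by (simp add: frac_le)
  have iWV0: "0 \<le> 1/(W+V)" using V W by simp
  have A1: "(t/(t+rho)) powr \<delta>1 \<le> 1" using t rho d1 by (intro powr_le1) auto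
  have B1: "(t/(t+d)) powr \<delta>2 \<le> 1" using t d d2 by (intro powr_le1) auto
  have A0: "0 \<le> (t/(t+rho)) powr \<delta>1" "0 \<le> (t/(t+d)) powr \<delta>2" by auto
  have "(t/(t+rho)) powr \<delta>1 * (1/(W+V) * (t/(t+d)) powr \<delta>2)
     \<le> C2 * min (d/rho) (rho/d) powr \<theta> / V"
  proof (cases "rho \<le> d")
    case True
    have "rho/d \<le> 1" "1 \<le> d/rho" using True rho d by auto
    then have m: "min (d/rho) (rho/d) = rho/d" by (simp add: min_def)
    have "t/(t+d) \<le> t/d" using t d by (simp add: frac_le)
    also have "\<dots> \<le> rho/d" using t d by (simp add: divide_right_mono)
    finally have "t/(t+d) \<le> rho/d" .
    then have "(t/(t+d)) powr \<delta>2 \<le> (rho/d) powr \<delta>2" using t d d2 by (intro powr_mono2) auto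
    also have "\<dots> \<le> (rho/d) powr \<theta>" using th True rho d by (intro powr_mono') auto
    finally have B: "(t/(t+d)) powr \<delta>2 \<le> (rho/d) powr \<theta>" .
    have "(t/(t+rho)) powr \<delta>1 * (1/(W+V) * (t/(t+d)) powr \<delta>2) \<le> 1 * (1/V * (rho/d) powr \<theta>)"
      by (intro mult_mono A1 B iWV) (use A0 iWV0 V in auto)
    also have "\<dots> = (rho/d) powr \<theta> / V" by simp
    also have "\<dots> \<le> C2 * ((rho/d) powr \<theta> / V)" using C2 V by (intro le_C2) auto
    also have "\<dots> = C2 * (rho/d) powr \<theta> / V" by simp
    finally show ?thesis unfolding m .
  next
    case False
    then have "d/rho \<le> 1" "1 \<le> rho/d" using rho d by auto
    then have m: "min (d/rho) (rho/d) = d/rho" by (simp add: min_def)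
    show ?thesis
    proof (cases "t \<le> d")
      case True
      have "t/(t+rho) \<le> t/rho" using t rho by (simp add: frac_le)
      also have "\<dots> \<le> d/rho" using True rho by (simp add: divide_right_mono)
      finally have "t/(t+rho) \<le> d/rho" .
      then have "(t/(t+rho)) powr \<delta>1 \<le> (d/rho) powr \<delta>1" using t rho d1 by (intro powr_mono2) auto
      also have "\<dots> \<le> (d/rho) powr \<theta>" using th False rho d by (intro powr_mono') auto
      finally have A: "(t/(t+rho)) powr \<delta>1 \<le> (d/rho) powr \<theta>" .
      have "(t/(t+rho)) powr \<delta>1 * (1/(W+V) * (t/(t+d)) powr \<delta>2) \<le> (d/rho) powr \<theta> * (1/V * 1)"
        by (intro mult_mono A B1 iWV) (use A0 iWV0 V in auto)
      also have "\<dots> = (d/rho) powr \<theta> / V" by simp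
      also have "\<dots> \<le> C2 * ((d/rho) powr \<theta> / V)" using C2 V by (intro le_C2) auto
      also have "\<dots> = C2 * (d/rho) powr \<theta> / V" by simp
      finally show ?thesis unfolding m .
    next
      case tl: False
      have Wl: "(1/C2)*(t/d) powr \<kappa> * V \<le> W" using rd tl by simp
      define P where "P = (t/d) powr \<kappa>"
      have P0: "P > 0" using t d by (simp add: P_def)
      have Pi: "1/P = (d/t) powr \<kappa>" using t d by (simp add: P_def powr_divide)
      have "P*V/C2 \<le> W" using Wl unfolding P_def by simp
      then have "1/W \<le> 1/(P*V/C2)" using P0 V C2 by (intro frac_le) auto
      also have "1/(P*V/C2) = C2 * (1/P) / V" by simp
      finally have "1/W \<le> C2 * (d/t) powr \<kappa> / V" unfolding Pi .
      also have "\<dots> \<le> C2 * (d/t) powr \<theta> / V" using th tl t d C2 V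
        by (intro divide_right_mono mult_left_mono powr_mono') auto
      finally have iW: "1/W \<le> C2 * (d/t) powr \<theta> / V" .
      have "1/(W+V) \<le> 1/W" using V W by (simp add: frac_le)
      with iW have iWV2: "1/(W+V) \<le> C2 * (d/t) powr \<theta> / V" by linarith
      have "t/(t+rho) \<le> t/rho" using t rho by (simp add: frac_le)
      then have "(t/(t+rho)) powr \<delta>1 \<le> (t/rho) powr \<delta>1" using t rho d1 by (intro powr_mono2) auto
      also have "\<dots> \<le> (t/rho) powr \<theta>" using th t rho by (intro powr_mono') auto
      finally have A: "(t/(t+rho)) powr \<delta>1 \<le> (t/rho) powr \<theta>" .
      have "(t/(t+rho)) powr \<delta>1 * (1/(W+V) * (t/(t+d)) powr \<delta>2) \<le> (t/rho) powr \<theta> * (C2 * (d/t) powr \<theta> / V * 1)"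
        by (intro mult_mono A B1 iWV2) (use A0 iWV0 V C2 in auto)
      also have "\<dots> = C2 * ((t/rho) powr \<theta> * (d/t) powr \<theta>) / V" by simp
      also have "(t/rho) powr \<theta> * (d/t) powr \<theta> = ((t/rho) * (d/t)) powr \<theta>" by (rule powr_mult[symmetric])
      also have "(t/rho) * (d/t) = d/rho" using t by simp
      finally show ?thesis unfolding m .
    qed
  qed
  then show ?thesis unfolding \<theta>_def .
qed



lemma two_powr_le: "0 \<le> b \<Longrightarrow> b \<le> 1 \<Longrightarrow> (2::real) powr b \<le> 2"
  using powr_mono[of b 1 2] by simp

lemma pw2m: "0 < (m::real) \<Longrightarrow> 0 \<le> b \<Longrightarrow> b \<le> 1 \<Longrightarrow> (2*m) powr b \<le> 2 * m powr b"
proof -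
  assume a: "0 < m" "0 \<le> b" "b \<le> 1"
  have "(2*m) powr b = 2 powr b * m powr b" by (rule powr_mult)
  also have "\<dots> \<le> 2 * m powr b" using two_powr_le[OF a(2,3)] by (intro mult_right_mono) auto
  finally show ?thesis .
qed

lemma pwA: fixes s m w a :: real
  assumes "0 \<le> s" "s \<le> m" "0 \<le> w" "w \<le> m" "0 < m" "0 \<le> a" "a \<le> 1"
  shows "s powr a * (s+w) powr (1-a) \<le> 2*m"
proof -
  have 1: "s powr a \<le> m powr a" using assms by (intro powr_mono2) auto
  have "(s+w) powr (1-a) \<le> (2*m) powr (1-a)" using assms by (intro powr_mono2) auto
  also have "\<dots> \<le> 2 * m powr (1-a)" using assms by (intro pw2m) auto
  finally have 2: "(s+w) powr (1-a) \<le> 2 * m powr (1-a)" .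
  have "s powr a * (s+w) powr (1-a) \<le> m powr a * (2 * m powr (1-a))"
    by (intro mult_mono 1 2) auto
  also have "\<dots> = 2 * (m powr a * m powr (1-a))" by simp
  also have "m powr a * m powr (1-a) = m powr (a + (1-a))" by (rule powr_add[symmetric])
  also have "\<dots> = m" using assms by simp
  finally show ?thesis .
qed

lemma P2: fixes px py d C3 a :: real
  assumes px: "px > 0" and py: "py > 0" and d: "d > 0" and C3: "C3 \<ge> 1" and a: "0 < a" "a < 1"
    and h1: "py \<le> C3 * px powr a * (px+d) powr (1-a)"
    and h2: "px \<le> C3 * py powr a * (py+d) powr (1-a)"
  shows "min (d/px) (px/d) \<le> 2*C3 * min (d/py) (py/d) powr a"
proof (cases "py \<le> d")
  case True
  have "py/d \<le> 1" "1 \<le> d/py" using True py d by auto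
  then have m: "min (d/py) (py/d) = py/d" by (simp add: min_def)
  have "(py+d) powr (1-a) \<le> (2*d) powr (1-a)" using True py a by (intro powr_mono2) auto
  also have "\<dots> \<le> 2 * d powr (1-a)" using d a by (intro pw2m) auto
  finally have "(py+d) powr (1-a) \<le> 2 * d powr (1-a)" .
  then have "px \<le> C3 * py powr a * (2 * d powr (1-a))"
    using h2 C3 by (meson order_trans mult_left_mono mult_nonneg_nonneg powr_ge_zero order.trans zero_le_one)
  also have "d powr (1-a) = d / d powr a" using d by (simp add: powr_diff)
  finally have "px \<le> 2 * C3 * (py powr a / d powr a) * d" by (simp add: field_simps)
  then have "px/d \<le> 2 * C3 * (py/d) powr a" using d by (simp add: powr_divide field_simps)
  moreover have "min (d/px) (px/d) \<le> px/d" by simp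
  ultimately show ?thesis unfolding m by linarith
next
  case False
  have "d/py \<le> 1" "1 \<le> py/d" using False py d by auto
  then have m: "min (d/py) (py/d) = d/py" by (simp add: min_def)
  have dpa: "d/py \<le> (d/py) powr a" using \<open>d/py \<le> 1\<close> d py a powr_mono'[of a 1 "d/py"] by simp
  show ?thesis
  proof (cases "d \<le> px")
    case True
    have "px powr a * (px+d) powr (1-a) \<le> 2*px" using True px d a by (intro pwA) auto
    then have "py \<le> C3 * (2*px)" using h1 C3
      by (metis (no_types, opaque_lifting) mult.assoc mult_left_mono order_trans zero_le_one order.trans)
    then have "d/px \<le> 2*C3*(d/py)" using px py d by (simp add: field_simps)
    also have "\<dots> \<le> 2*C3*(d/py) powr a" using dpa C3 by (intro mult_left_mono) auto
    finally show ?thesis unfolding m by (meson min.coboundedI1 order_trans)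
  next
    case False
    have "px powr a * (px+d) powr (1-a) \<le> 2*d" using False px d a by (intro pwA) auto
    then have "py \<le> C3 * (2*d)" using h1 C3
      by (metis (no_types, opaque_lifting) mult.assoc mult_left_mono order_trans zero_le_one order.trans)
    then have "1 \<le> 2*C3*(d/py)" using py by (simp add: field_simps)
    also have "\<dots> \<le> 2*C3*(d/py) powr a" using dpa C3 by (intro mult_left_mono) auto
    finally have "1 \<le> 2*C3*(d/py) powr a" .
    moreover have "px/d \<le> 1" using False px d by simp
    then have "min (d/px) (px/d) \<le> 1" by (meson min.coboundedI2)
    ultimately show ?thesis unfolding m by linarith
  qed
qed



lemma dyadic1: assumes "(1::real) \<le> z" shows "\<exists>k::nat. 2^k \<le> z \<and> z < 2^(Suc k)"
proof -
  obtain b :: nat where b: "z < 2^b" using real_arch_pow[of 2 z] by auto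
  have "\<forall>k. 2^k \<le> z \<longrightarrow> id k < b"
  proof safe
    fix k :: nat assume "(2::real)^k \<le> z"
    then have "(2::real)^k < 2^b" using b by linarith
    then show "id k < b" by simp
  qed
  then obtain k where k: "(2::real)^k \<le> z" and mx: "\<forall>j. (2::real)^j \<le> z \<longrightarrow> id j \<le> id k"
    using ex_has_greatest_nat[of "\<lambda>k. (2::real)^k \<le> z" 0 id b] assms by auto
  have "\<not> (2::real)^(Suc k) \<le> z"
  proof
    assume "(2::real)^(Suc k) \<le> z"
    then have "Suc k \<le> k" using mx by (metis id_apply)
    then show False by simp
  qed
  then show ?thesis using k by auto
qed

lemma dyadic2: assumes "(1::real) < z" shows "\<exists>k::nat. 2^k < z \<and> z \<le> 2^(Suc k)"
proof -
  obtain b :: nat where b: "z < 2^b" using real_arch_pow[of 2 z] by auto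
  have "\<forall>k. 2^k < z \<longrightarrow> id k < b"
  proof safe
    fix k :: nat assume "(2::real)^k < z"
    then have "(2::real)^k < 2^b" using b by linarith
    then show "id k < b" by simp
  qed
  then obtain k where k: "(2::real)^k < z" and mx: "\<forall>j. (2::real)^j < z \<longrightarrow> id j \<le> id k"
    using ex_has_greatest_nat[of "\<lambda>k. (2::real)^k < z" 0 id b] assms by auto
  have "\<not> (2::real)^(Suc k) < z"
  proof
    assume "(2::real)^(Suc k) < z"
    then have "Suc k \<le> k" using mx by (metis id_apply)
    then show False by simp
  qed
  then show ?thesis using k by auto
qed

lemma half_pow_powr: "0 \<le> \<beta> \<Longrightarrow> ((1::real)/2^k) powr \<beta> = ((1/2) powr \<beta>)^k"
  by (simp add: powr_power powr_divide powr_realpow[symmetric] powr_powr mult.commute)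



lemma annulus_int: fixes M :: "'a::metric_space measure"
  assumes rd: "RD_space M" and Dd: "\<And>x r. 0<r \<Longrightarrow> measure M (ball x (2*r)) \<le> Dd * measure M (ball x r)"
    and r1: "0 < r1" and u: "0 \<le> u"
  shows "(\<integral>\<^sup>+x. ennreal (u / measure M (ball y r1)) * indicator (ball y (2*r1) - ball y r1) x \<partial>M) \<le> ennreal (u*Dd)"
proof -
  have mpos: "0 < measure M (ball y r1)" using rd_ball_pos[OF rd r1] .
  have As: "ball y (2*r1) - ball y r1 \<in> sets M" using rd_ball_sets[OF rd] by blast
  have "(\<integral>\<^sup>+x. ennreal (u / measure M (ball y r1)) * indicator (ball y (2*r1) - ball y r1) x \<partial>M)
      = ennreal (u / measure M (ball y r1)) * emeasure M (ball y (2*r1) - ball y r1)"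
    by (rule nn_integral_cmult_indicator[OF As])
  also have "\<dots> \<le> ennreal (u / measure M (ball y r1)) * emeasure M (ball y (2*r1))"
    by (intro mult_left_mono emeasure_mono) (use rd_ball_sets[OF rd] in auto)
  also have "emeasure M (ball y (2*r1)) = ennreal (measure M (ball y (2*r1)))" by (rule rd_emeas_ball[OF rd])
  also have "ennreal (u / measure M (ball y r1)) * ennreal (measure M (ball y (2*r1)))
      = ennreal (u / measure M (ball y r1) * measure M (ball y (2*r1)))"
    by (rule ennreal_mult[symmetric]) (use u mpos in auto)
  also have "u / measure M (ball y r1) * measure M (ball y (2*r1)) \<le> u / measure M (ball y r1) * (Dd * measure M (ball y r1))"
    using Dd[OF r1] u mpos by (intro mult_left_mono) auto
  also have "\<dots> = u * Dd" using mpos by simp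
  finally show ?thesis by (simp add: ennreal_leI)
qed

lemma coef_bound: fixes n d r1 \<beta> mu1 mud :: real
  assumes "0 \<le> n" "n \<le> 1/2^k" "0 < \<beta>" "0 < mu1" "mu1 \<le> mud"
  shows "n powr \<beta> / mud \<le> ((1/2) powr \<beta>)^k / mu1"
proof -
  have "n powr \<beta> \<le> (1/2^k) powr \<beta>" using assms by (intro powr_mono2) auto
  also have "\<dots> = ((1/2) powr \<beta>)^k" using assms by (simp add: half_pow_powr)
  finally have 1: "n powr \<beta> \<le> ((1/2) powr \<beta>)^k" .
  have "n powr \<beta> / mud \<le> n powr \<beta> / mu1" using assms by (intro divide_left_mono) auto
  also have "\<dots> \<le> ((1/2) powr \<beta>)^k / mu1" using 1 assms by (intro divide_right_mono) auto
  finally show ?thesis .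
qed



lemma column: fixes M :: "'a::metric_space measure"
  assumes rd: "RD_space M" and Dd: "\<And>x r. 0<r \<Longrightarrow> measure M (ball x (2*r)) \<le> Dd * measure M (ball x r)"
    and r: "0 < r" and b: "0 < \<beta>"
  shows "(\<integral>\<^sup>+x. ennreal (min (dist x y / r) (r / dist x y) powr \<beta> / measure M (ball y (dist x y))) \<partial>M)
      \<le> ennreal (2 * (Dd / (1 - (1/2) powr \<beta>)))"
proof -
  define q where "q = (1/2::real) powr \<beta>"
  have q0: "0 < q" unfolding q_def by simp
  have q1: "q < 1" unfolding q_def using powr_less_mono'[of "1/2::real" 0 \<beta>] b by simp
  have Dd0: "0 \<le> Dd"
  proof -
    obtain x0 :: 'a where True by simp
    have "0 < measure M (ball x0 (2*1))" using rd_ball_pos[OF rd] by simp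
    also have "\<dots> \<le> Dd * measure M (ball x0 1)" using Dd[of 1 x0] by simp
    finally show ?thesis using rd_ball_pos[OF rd, of 1 x0] by (simp add: zero_less_mult_iff)
  qed
  define A where "A = (\<lambda>r1::real. ball y (2*r1) - ball y r1)"
  define F where "F = (\<lambda>k x. ennreal (q^k / measure M (ball y (2^k*r))) * indicator (A (2^k*r)) x)"
  define G where "G = (\<lambda>k x. ennreal (q^k / measure M (ball y (r/2^(Suc k)))) * indicator (A (r/2^(Suc k))) x)"
  define h where "h = (\<lambda>x. min (dist x y / r) (r / dist x y) powr \<beta> / measure M (ball y (dist x y)))"
  have As: "A r1 \<in> sets M" for r1 unfolding A_def using rd_ball_sets[OF rd] by blast
  have Fm: "F k \<in> borel_measurable M" for k unfolding F_def using As by measurable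
  have Gm: "G k \<in> borel_measurable M" for k unfolding G_def using As by measurable
  have pt: "ennreal (h x) \<le> (\<Sum>k. F k x) + (\<Sum>k. G k x)" for x
  proof -
    define d where "d = dist x y"
    show ?thesis
    proof (cases "d = 0")
      case True
      then show ?thesis unfolding h_def d_def[symmetric] by simp
    next
      case False
      then have d0: "0 < d" unfolding d_def by simp
      define n where "n = min (d / r) (r / d)"
      have n0: "0 \<le> n" unfolding n_def using d0 r by simp
      have hx: "h x = n powr \<beta> / measure M (ball y d)" unfolding h_def n_def d_def ..
      show ?thesis
      proof (cases "r \<le> d")
        case True
        obtain k where k: "2^k \<le> d/r" "d/r < 2^(Suc k)" using dyadic1[of "d/r"] True r by auto
        have k1: "2^k*r \<le> d" "d < 2*(2^k*r)" using k r by (auto simp: field_simps)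
        have nk: "n \<le> 1/2^k"
        proof -
          have "n \<le> r/d" unfolding n_def by simp
          also have "\<dots> \<le> 1/2^k" using k1 r d0 by (simp add: field_simps)
          finally show ?thesis .
        qed
        have mb: "measure M (ball y (2^k*r)) \<le> measure M (ball y d)" using k1 by (intro rd_mono[OF rd]) auto
        have "h x \<le> q^k / measure M (ball y (2^k*r))" unfolding hx q_def
          by (rule coef_bound[OF n0 nk b _ mb]) (rule rd_ball_pos[OF rd], use r in simp)
        moreover have "x \<in> A (2^k*r)" unfolding A_def using k1 by (simp add: d_def dist_commute)
        ultimately have "ennreal (h x) \<le> F k x" unfolding F_def by (simp add: ennreal_leI)
        also have "\<dots> \<le> (\<Sum>k. F k x)" using sum_le_suminf[OF summableI, of "{k}" "\<lambda>k. F k x"] by simp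
        also have "\<dots> \<le> (\<Sum>k. F k x) + (\<Sum>k. G k x)" by simp
        finally show ?thesis .
      next
        case False
        obtain k where k: "2^k < r/d" "r/d \<le> 2^(Suc k)" using dyadic2[of "r/d"] False d0 by auto
        have k1: "r/2^(Suc k) \<le> d" "d < 2*(r/2^(Suc k))" using k r d0 by (auto simp: field_simps)
        have nk: "n \<le> 1/2^k"
        proof -
          have "n \<le> d/r" unfolding n_def by simp
          also have "\<dots> \<le> 1/2^k" using k r d0 by (simp add: field_simps)
          finally show ?thesis .
        qed
        have mb: "measure M (ball y (r/2^(Suc k))) \<le> measure M (ball y d)" using k1 by (intro rd_mono[OF rd]) auto
        have "h x \<le> q^k / measure M (ball y (r/2^(Suc k)))" unfolding hx q_def
          by (rule coef_bound[OF n0 nk b _ mb]) (rule rd_ball_pos[OF rd], use r in simp)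
        moreover have "x \<in> A (r/2^(Suc k))" unfolding A_def using k1 by (simp add: d_def dist_commute)
        ultimately have "ennreal (h x) \<le> G k x" unfolding G_def by (simp add: ennreal_leI)
        also have "\<dots> \<le> (\<Sum>k. G k x)" using sum_le_suminf[OF summableI, of "{k}" "\<lambda>k. G k x"] by simp
        also have "\<dots> \<le> (\<Sum>k. F k x) + (\<Sum>k. G k x)" by simp
        finally show ?thesis .
      qed
    qed
  qed
  have Fi: "(\<integral>\<^sup>+x. F k x \<partial>M) \<le> ennreal (q^k * Dd)" for k
    unfolding F_def A_def by (rule annulus_int[OF rd Dd]) (use r q0 in auto)
  have Gi: "(\<integral>\<^sup>+x. G k x \<partial>M) \<le> ennreal (q^k * Dd)" for k
    unfolding G_def A_def by (rule annulus_int[OF rd Dd]) (use r q0 in auto)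
  have geo: "(\<Sum>k. ennreal (q^k * Dd)) = ennreal (Dd / (1 - q))"
  proof -
    have s: "summable (\<lambda>k. q^k * Dd)" using q0 q1 by (intro summable_mult2 summable_geometric) auto
    have "(\<Sum>k. ennreal (q^k * Dd)) = ennreal (\<Sum>k. q^k * Dd)"
      by (rule suminf_ennreal2) (use q0 Dd0 s in auto)
    also have "(\<Sum>k. q^k * Dd) = Dd / (1 - q)"
      using suminf_mult2[OF summable_geometric, of q Dd] suminf_geometric[of q] q0 q1 by simp
    finally show ?thesis .
  qed
  have "(\<integral>\<^sup>+x. ennreal (h x) \<partial>M) \<le> (\<integral>\<^sup>+x. (\<Sum>k. F k x) + (\<Sum>k. G k x) \<partial>M)"
    by (intro nn_integral_mono pt)
  also have "\<dots> = (\<integral>\<^sup>+x. (\<Sum>k. F k x) \<partial>M) + (\<integral>\<^sup>+x. (\<Sum>k. G k x) \<partial>M)"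
    by (rule nn_integral_add) (use Fm Gm in measurable)
  also have "(\<integral>\<^sup>+x. (\<Sum>k. F k x) \<partial>M) = (\<Sum>k. \<integral>\<^sup>+x. F k x \<partial>M)" by (rule nn_integral_suminf[OF Fm])
  also have "(\<integral>\<^sup>+x. (\<Sum>k. G k x) \<partial>M) = (\<Sum>k. \<integral>\<^sup>+x. G k x \<partial>M)" by (rule nn_integral_suminf[OF Gm])
  also have "(\<Sum>k. \<integral>\<^sup>+x. F k x \<partial>M) + (\<Sum>k. \<integral>\<^sup>+x. G k x \<partial>M) \<le> (\<Sum>k. ennreal (q^k * Dd)) + (\<Sum>k. ennreal (q^k * Dd))"
    by (intro add_mono suminf_le Fi Gi) auto
  also have "\<dots> = ennreal (2 * (Dd / (1 - q)))" unfolding geo using q1 Dd0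
    by (simp add: ennreal_plus[symmetric] del: ennreal_plus)
  finally show ?thesis unfolding h_def q_def .
qed



lemma adm_weak: fixes px py d C3 a :: real
  assumes "0 < px" "0 \<le> d" "0 < a" "a < 1" "0 < C3"
    and "py \<le> C3 * px powr a * (px + d) powr (1 - a)"
  shows "py \<le> C3 * (px + d)"
proof -
  have "px powr a \<le> (px+d) powr a" using assms by (intro powr_mono2) auto
  then have "px powr a * (px + d) powr (1 - a) \<le> (px+d) powr a * (px + d) powr (1 - a)"
    by (intro mult_right_mono) auto
  also have "\<dots> = (px+d) powr (a + (1-a))" by (rule powr_add[symmetric])
  also have "\<dots> = px + d" using assms by simp
  finally have "px powr a * (px + d) powr (1 - a) \<le> px + d" .
  then have "C3 * (px powr a * (px + d) powr (1 - a)) \<le> C3 * (px + d)" using assms by (intro mult_left_mono) auto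
  then show ?thesis using assms(6) by (simp add: mult.assoc)
qed

lemma gfun: fixes \<rho> :: "'a::metric_space \<Rightarrow> real"
  assumes pos: "\<And>x. 0 < \<rho> x" and w: "\<And>x y. \<rho> y \<le> C3 * (\<rho> x + dist x y)" and C3: "C3 > 0"
  shows "0 < (INF z. \<rho> z + dist y z)" "(INF z. \<rho> z + dist y z) \<le> \<rho> y"
    "\<rho> y \<le> C3 * (INF z. \<rho> z + dist y z)"
    "dist (INF z. \<rho> z + dist x z) (INF z. \<rho> z + dist y z) \<le> dist x y"
proof -
  define g where "g = (\<lambda>y. INF z. \<rho> z + dist y z)"
  have bdd: "bdd_below (range (\<lambda>z. \<rho> z + dist y z))" for y
  proof (rule bdd_belowI[of _ 0])
    fix u assume "u \<in> range (\<lambda>z. \<rho> z + dist y z)"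
    then obtain z where "u = \<rho> z + dist y z" by auto
    moreover have "0 < \<rho> z" by (rule pos)
    ultimately show "0 \<le> u" by simp
  qed
  have up: "g y \<le> \<rho> z + dist y z" for y z unfolding g_def by (rule cINF_lower[OF bdd]) simp
  have lo: "\<rho> y / C3 \<le> g y" for y unfolding g_def
  proof (rule cINF_greatest)
    fix z
    have "\<rho> y \<le> C3 * (\<rho> z + dist z y)" by (rule w)
    then show "\<rho> y / C3 \<le> \<rho> z + dist y z" using C3 by (simp add: divide_le_eq dist_commute mult.commute)
  qed simp
  show "0 < (INF z. \<rho> z + dist y z)" using lo[of y] pos[of y] C3 unfolding g_def
    by (meson divide_pos_pos order_less_le_trans)
  show "(INF z. \<rho> z + dist y z) \<le> \<rho> y" using up[of y y] unfolding g_def by simp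
  show "\<rho> y \<le> C3 * (INF z. \<rho> z + dist y z)" using lo[of y] C3 unfolding g_def by (simp add: divide_le_eq mult.commute)
  have lip: "g a \<le> g b + dist a b" for a b
  proof -
    have "g a - dist a b \<le> (INF z. \<rho> z + dist b z)"
    proof (rule cINF_greatest)
      fix z
      have "g a \<le> \<rho> z + dist a z" by (rule up)
      moreover have "dist a z \<le> dist a b + dist b z" by (rule dist_triangle)
      ultimately show "g a - dist a b \<le> \<rho> z + dist b z" by linarith
    qed simp
    then show ?thesis unfolding g_def by simp
  qed
  show "dist (INF z. \<rho> z + dist x z) (INF z. \<rho> z + dist y z) \<le> dist x y"
  proof -
    have "dist (g x) (g y) \<le> dist x y" using lip[of x y] lip[of y x]
      unfolding dist_real_def by (simp add: dist_commute abs_le_iff)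
    then show ?thesis unfolding g_def .
  qed
qed

lemma P3: fixes py g d :: real
  assumes "0 < g" "g \<le> py" "py \<le> C3 * g" "0 < d" "1 \<le> C3"
  shows "min (d/py) (py/d) \<le> C3 * min (d/g) (g/d)"
proof -
  have "d/py \<le> d/g" using assms by (intro divide_left_mono) auto
  also have "\<dots> \<le> C3 * (d/g)" using assms by (intro le_C2) auto
  finally have 1: "d/py \<le> C3 * (d/g)" .
  have 2: "py/d \<le> C3 * (g/d)" using assms by (simp add: divide_right_mono)
  show ?thesis using 1 2 by (simp add: min_def)
qed

lemma P23: fixes m my n C3 a \<theta> :: real
  assumes "0 \<le> m" "m \<le> 2*C3 * my powr a" "0 \<le> my" "my \<le> C3 * n" "0 \<le> n" "0 < a" "0 < \<theta>" "1 \<le> C3"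
  shows "m powr \<theta> \<le> (2*C3) powr \<theta> * C3 powr (a*\<theta>) * n powr (a*\<theta>)"
proof -
  have "m powr \<theta> \<le> (2*C3 * my powr a) powr \<theta>" using assms by (intro powr_mono2) auto
  also have "\<dots> = (2*C3) powr \<theta> * (my powr a) powr \<theta>" by (rule powr_mult)
  also have "(my powr a) powr \<theta> = my powr (a*\<theta>)" by (simp add: powr_powr)
  also have "my powr (a*\<theta>) \<le> (C3 * n) powr (a*\<theta>)" using assms by (intro powr_mono2) auto
  also have "(C3 * n) powr (a*\<theta>) = C3 powr (a*\<theta>) * n powr (a*\<theta>)" by (rule powr_mult)
  finally show ?thesis using assms by (simp add: mult.assoc mult_left_mono)
qed



lemma point_null: fixes M :: "'a::metric_space measure" assumes rd: "RD_space M"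
  shows "{x} \<in> null_sets M"
proof -
  obtain \<kappa> N C2 where h: "0 < \<kappa>" "\<kappa> \<le> N" "1 \<le> C2" and
    lo: "\<And>x r lam. 0<r \<Longrightarrow> 1\<le>lam \<Longrightarrow> (1/C2)*lam powr \<kappa> * Vr M x r \<le> Vr M x (lam*r)"
    using rd_consts[OF rd] by blast
  have xs: "{x} \<in> sets M" using rd_sets[OF rd] by (metis borel_closed closed_singleton)
  define V1 where "V1 = measure M (ball x 1)"
  have V1: "0 < V1" unfolding V1_def using rd_ball_pos[OF rd] by simp
  define m where "m = measure M {x}"
  have mle: "m \<le> C2 * s powr \<kappa> * V1" if s: "0 < s" "s \<le> 1" for s
  proof -
    have "m \<le> measure M (ball x s)" unfolding m_def
      by (rule measure_mono_fmeasurable[OF _ xs rd_ball_fin[OF rd]]) (use s in auto)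
    moreover have "(1/C2) * (1/s) powr \<kappa> * Vr M x s \<le> Vr M x ((1/s) * s)" by (rule lo) (use s in auto)
    then have "(1/C2) * (1/s) powr \<kappa> * measure M (ball x s) \<le> V1" using s unfolding Vr_def V1_def by simp
    then have "measure M (ball x s) \<le> C2 * s powr \<kappa> * V1" using s h
      by (simp add: powr_divide field_simps)
    ultimately show ?thesis by linarith
  qed
  have m0: "m \<le> 0"
  proof (rule ccontr)
    assume "\<not> m \<le> 0"
    then have mp: "0 < m" by simp
    define c where "c = m / (2*C2*V1)"
    have c0: "0 < c" unfolding c_def using mp V1 h by simp
    define s where "s = min 1 (c powr (1/\<kappa>))"
    have s0: "0 < s" "s \<le> 1" unfolding s_def using c0 by auto
    have "s powr \<kappa> \<le> (c powr (1/\<kappa>)) powr \<kappa>" unfolding s_def using h c0 by (intro powr_mono2) auto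
    also have "\<dots> = c" using h c0 by (simp add: powr_powr)
    finally have "s powr \<kappa> \<le> c" .
    then have "C2 * s powr \<kappa> * V1 \<le> C2 * c * V1" using h V1 by (intro mult_right_mono mult_left_mono) auto
    also have "\<dots> = m/2" unfolding c_def using h V1 by simp
    finally show False using mle[OF s0] mp by linarith
  qed
  have "emeasure M {x} \<le> emeasure M (ball x 1)" by (rule emeasure_mono) (use rd_ball_sets[OF rd] in auto)
  then have "emeasure M {x} \<noteq> \<infinity>" using rd_ball_em[OF rd, of 1 x] by (auto simp: top_unique)
  then have "emeasure M {x} = ennreal m" unfolding m_def by (simp add: emeasure_eq_ennreal_measure)
  then have "emeasure M {x} = 0" using m0 measure_nonneg[of M "{x}"] unfolding m_def by simp
  then show ?thesis using xs by (simp add: null_sets_def)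
qed



lemma kernel_bound:
  fixes M :: "'a::metric_space measure" and \<rho> g :: "'a \<Rightarrow> real"
  assumes rd: "RD_space M" and k: "0 < \<kappa>" and C2: "1 \<le> C2"
    and lo: "\<And>x r lam. 0<r \<Longrightarrow> 1\<le>lam \<Longrightarrow> (1/C2)*lam powr \<kappa> * Vr M x r \<le> Vr M x (lam*r)"
    and Dd: "\<And>x r. 0<r \<Longrightarrow> measure M (ball x (2*r)) \<le> Dd * measure M (ball x r)"
    and adm: "\<And>x y. \<rho> y \<le> C3 * \<rho> x powr (1/(1+k0)) * (\<rho> x + dist x y) powr (k0/(1+k0))"
    and pos: "\<And>x. 0 < \<rho> x" and C3: "1 \<le> C3" and k0: "0 < k0"
    and g: "\<And>y. 0 < g y" "\<And>y. g y \<le> \<rho> y" "\<And>y. \<rho> y \<le> C3 * g y"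
    and d1: "0 < \<delta>1" and d2: "0 < \<delta>2"
    and t: "0 < t" "t < \<rho> x" and xy: "x \<noteq> y"
  shows "(t/(t+\<rho> x)) powr \<delta>1 * dec M t x y \<delta>2 \<le>
     C2 * (2*C3) powr (min \<delta>1 (min \<delta>2 \<kappa>)) * C3 powr (1/(1+k0) * min \<delta>1 (min \<delta>2 \<kappa>)) * Dd *
     (min (dist x y / g y) (g y / dist x y) powr (1/(1+k0) * min \<delta>1 (min \<delta>2 \<kappa>)) / measure M (ball y (dist x y)))"
proof -
  define a where "a = 1/(1+k0)"
  define \<theta> where "\<theta> = min \<delta>1 (min \<delta>2 \<kappa>)"
  define d where "d = dist x y"
  have a: "0 < a" "a < 1" unfolding a_def using k0 by auto
  have ka: "k0/(1+k0) = 1 - a" unfolding a_def using k0 by (simp add: field_simps)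
  have th: "0 < \<theta>" unfolding \<theta>_def using d1 d2 k by simp
  have d0: "0 < d" unfolding d_def using xy by simp
  define V where "V = Vxy M x y"
  define W where "W = Vr M x t"
  have V0: "0 < V" unfolding V_def Vxy_def using rd_ball_pos[OF rd] d0 unfolding d_def by simp
  have W0: "0 < W" unfolding W_def Vr_def using rd_ball_pos[OF rd] t by simp
  have step1: "(t/(t+\<rho> x)) powr \<delta>1 * (1/(W+V) * (t/(t+d)) powr \<delta>2)
     \<le> C2 * min (d/\<rho> x) (\<rho> x/d) powr \<theta> / V"
    unfolding \<theta>_def
  proof (rule P1[OF t d0 V0 W0 C2 k d1 d2])
    assume dt: "d < t"
    have "(1/C2)*(t/d) powr \<kappa> * Vr M x d \<le> Vr M x ((t/d)*d)" by (rule lo) (use d0 dt in auto)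
    then show "(1/C2)*(t/d) powr \<kappa> * V \<le> W" unfolding V_def W_def Vxy_def Vr_def d_def using d0 unfolding d_def by simp
  qed
  have dec: "dec M t x y \<delta>2 = 1/(W+V) * (t/(t+d)) powr \<delta>2" unfolding dec_def W_def V_def d_def ..
  define m where "m = min (d/\<rho> x) (\<rho> x/d)"
  define my where "my = min (d/\<rho> y) (\<rho> y/d)"
  define n where "n = min (d/g y) (g y/d)"
  have px: "0 < \<rho> x" "0 < \<rho> y" "0 < g y" using pos g by auto
  have m0: "0 \<le> m" "0 \<le> my" "0 \<le> n" unfolding m_def my_def n_def using d0 px by auto
  have h1: "\<rho> y \<le> C3 * \<rho> x powr a * (\<rho> x + d) powr (1-a)" using adm[of y x] unfolding a_def[symmetric] ka d_def .
  have h2: "\<rho> x \<le> C3 * \<rho> y powr a * (\<rho> y + d) powr (1-a)" using adm[of x y] unfolding a_def[symmetric] ka d_def by (simp add: dist_commute)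
  have mm: "m \<le> 2*C3 * my powr a" unfolding m_def my_def by (rule P2[OF pos pos d0 C3 a h1 h2])
  have mn: "my \<le> C3 * n" unfolding my_def n_def by (rule P3[OF g(1) g(2) g(3) d0 C3])
  have mt: "m powr \<theta> \<le> (2*C3) powr \<theta> * C3 powr (a*\<theta>) * n powr (a*\<theta>)"
    by (rule P23[OF m0(1) mm m0(2) mn m0(3) a(1) th C3])
  have "measure M (ball y d) \<le> measure M (ball x (2*d))"
  proof (rule rd_mono[OF rd], rule)
    fix z assume "z \<in> ball y d"
    then have "dist y z < d" by simp
    moreover have "dist x z \<le> dist x y + dist y z" by (rule dist_triangle)
    ultimately show "z \<in> ball x (2*d)" unfolding d_def by simp
  qed
  also have "\<dots> \<le> Dd * V" using Dd[OF d0] unfolding V_def Vxy_def d_def .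
  finally have VV: "measure M (ball y d) \<le> Dd * V" .
  have my0: "0 < measure M (ball y d)" using rd_ball_pos[OF rd d0] .
  have Dd0: "0 < Dd" using VV my0 V0 by (metis mult_le_0_iff not_le order_less_le_trans less_le_not_le)
  have iV: "1/V \<le> Dd / measure M (ball y d)" using VV V0 my0 Dd0 by (simp add: field_simps)
  define K where "K = (2*C3) powr \<theta> * C3 powr (a*\<theta>)"
  have K0: "0 \<le> K" unfolding K_def by simp
  have "(t/(t+\<rho> x)) powr \<delta>1 * dec M t x y \<delta>2 \<le> C2 * m powr \<theta> / V" using step1 unfolding dec m_def .
  also have "\<dots> = C2 * m powr \<theta> * (1/V)" by simp
  also have "\<dots> \<le> C2 * (K * n powr (a*\<theta>)) * (Dd / measure M (ball y d))"
    using mt iV C2 V0 K0 unfolding K_def by (intro mult_mono mult_left_mono) auto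
  also have "\<dots> = C2 * K * Dd * (n powr (a*\<theta>) / measure M (ball y d))" by simp
  finally show ?thesis unfolding K_def n_def d_def a_def \<theta>_def by (simp add: mult.assoc)
qed



theorem lemma4p4:
  fixes M :: "'a::metric_space measure" and \<rho> :: "'a \<Rightarrow> real"
    and T Tt :: "real \<Rightarrow> 'a \<Rightarrow> 'a \<Rightarrow> real"
    and e1 e2 e3 C \<delta>1 \<delta>2 \<delta>3 :: real
  assumes "RD_space M" and "admissible \<rho>"
    and "cont_AOTI M e1 e2 e3 Tt"
    and "\<forall>t>0. L2_kernel_operator M (T t)"
    and "0 < C" and "0 < \<delta>2" and "\<delta>2 \<le> e2" and "0 < \<delta>1" and "0 < \<delta>3"
    and "\<forall>t>0. \<forall>x y. \<bar>T t x y\<bar> \<le> C * dec M t x y \<delta>2 * (\<rho> x / (t + \<rho> x)) powr \<delta>3"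
    and "\<forall>t>0. \<forall>x y. \<bar>T t x y - Tt t x y\<bar> \<le> C * (t / (t + \<rho> x)) powr \<delta>1 * dec M t x y \<delta>2"
  shows "\<exists>C'>0. \<forall>f::'a \<Rightarrow> real. integrable M f \<longrightarrow>
    (\<integral>\<^sup>+x. (SUP t\<in>{0<..<\<rho> x}. ennreal \<bar>\<integral>y. (T t x y - Tt t x y) * f y \<partial>M\<bar>) \<partial>M)
      \<le> ennreal C' * (\<integral>\<^sup>+x. ennreal \<bar>f x\<bar> \<partial>M)"
proof -
  note rd = assms(1)
  have C0: "0 < C" and d1: "0 < \<delta>1" and d2: "0 < \<delta>2" using assms by auto
  have Ebd: "\<And>t x y. 0 < t \<Longrightarrow> \<bar>T t x y - Tt t x y\<bar> \<le> C * (t / (t + \<rho> x)) powr \<delta>1 * dec M t x y \<delta>2"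
    using assms(11) by blast
  obtain \<kappa> N C2 where h: "0 < \<kappa>" "\<kappa> \<le> N" "1 \<le> C2" and
    lu: "\<And>x r lam. 0<r \<Longrightarrow> 1\<le>lam \<Longrightarrow>
     (1/C2)*lam powr \<kappa> * Vr M x r \<le> Vr M x (lam*r) \<and> Vr M x (lam*r) \<le> C2*lam powr N * Vr M x r"
    using rd_consts[OF rd] by blast
  have lo: "\<And>x r lam. 0<r \<Longrightarrow> 1\<le>lam \<Longrightarrow> (1/C2)*lam powr \<kappa> * Vr M x r \<le> Vr M x (lam*r)"
    using lu by blast
  define Dd where "Dd = C2 * 2 powr N"
  have Dd: "\<And>x r. 0<r \<Longrightarrow> measure M (ball x (2*r)) \<le> Dd * measure M (ball x r)"
    using lu[of _ 2] unfolding Dd_def Vr_def by simp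
  have Dd0: "0 < Dd" unfolding Dd_def using h by simp
  obtain C3 k0 where pos: "\<And>x. 0 < \<rho> x" and C30: "0 < C3" and k0: "0 < k0" and
    adm: "\<And>x y. \<rho> y \<le> C3 * \<rho> x powr (1/(1+k0)) * (\<rho> x + dist x y) powr (k0/(1+k0))"
    using assms(2) unfolding admissible_def by blast
  define a where "a = 1/(1+k0)"
  have a: "0 < a" "a < 1" unfolding a_def using k0 by auto
  have ka: "k0/(1+k0) = 1 - a" unfolding a_def using k0 by (simp add: field_simps)
  have C3: "1 \<le> C3"
  proof -
    obtain x0 :: 'a where True by simp
    have 1: "\<rho> x0 \<le> C3 * \<rho> x0 powr a * \<rho> x0 powr (1-a)" using adm[of x0 x0] unfolding a_def[symmetric] ka by simp
    have "\<rho> x0 powr a * \<rho> x0 powr (1-a) = \<rho> x0 powr (a + (1-a))" by (rule powr_add[symmetric])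
    then have "\<rho> x0 powr a * \<rho> x0 powr (1-a) = \<rho> x0" using pos[of x0] by simp
    then have "\<rho> x0 \<le> C3 * \<rho> x0" using 1 by (simp add: mult.assoc)
    then show ?thesis using pos[of x0] by simp
  qed
  have w: "\<And>x y. \<rho> y \<le> C3 * (\<rho> x + dist x y)"
  proof -
    fix x y
    show "\<rho> y \<le> C3 * (\<rho> x + dist x y)"
      by (rule adm_weak[OF pos _ a C30]) (use adm[of y x] ka a_def in auto)
  qed
  define g where "g = (\<lambda>y. INF z. \<rho> z + dist y z)"
  have g: "\<And>y. 0 < g y" "\<And>y. g y \<le> \<rho> y" "\<And>y. \<rho> y \<le> C3 * g y"
    and glip: "\<And>x y. dist (g x) (g y) \<le> dist x y"
    unfolding g_def using gfun[OF pos w C30] by auto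
  have gcont: "continuous_on UNIV g"
    by (rule lipschitz_on_continuous_on[of 1]) (rule lipschitz_onI, use glip in auto)
  have gm: "g \<in> borel_measurable M"
  proof -
    have "measurable M (borel::real measure) = measurable borel borel"
      by (rule measurable_cong_sets[OF rd_sets[OF rd]]) simp
    then show ?thesis using borel_measurable_continuous_onI[OF gcont] by simp
  qed
  obtain D :: "'a set" where Dc: "countable D" and Dd': "\<forall>z e. e>0 \<longrightarrow> (\<exists>q\<in>D. dist z q < e)"
    using rd_separable[OF rd] by blast
  define \<theta> where "\<theta> = min \<delta>1 (min \<delta>2 \<kappa>)"
  define \<beta> where "\<beta> = a * \<theta>"
  have th: "0 < \<theta>" unfolding \<theta>_def using d1 d2 h by simp
  have b0: "0 < \<beta>" unfolding \<beta>_def using th a by simp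
  define A where "A = C * (C2 * (2*C3) powr \<theta> * C3 powr \<beta> * Dd)"
  have A0: "0 < A" unfolding A_def using C0 h C3 Dd0 by simp
  define H0 where "H0 = (\<lambda>x y. min (dist x y / g y) (g y / dist x y) powr \<beta> / measure M (ball y (dist x y)))"
  have H00: "0 \<le> H0 x y" for x y unfolding H0_def by simp
  have kb: "\<bar>T t x y - Tt t x y\<bar> \<le> A * H0 x y" if t: "0 < t" "t < \<rho> x" and xy: "x \<noteq> y" for t x y
  proof -
    have "\<bar>T t x y - Tt t x y\<bar> \<le> C * ((t / (t + \<rho> x)) powr \<delta>1 * dec M t x y \<delta>2)"
      using Ebd[OF t(1)] by (simp add: mult.assoc)
    also have "\<dots> \<le> C * (C2 * (2*C3) powr \<theta> * C3 powr \<beta> * Dd * H0 x y)"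
      unfolding H0_def \<beta>_def \<theta>_def a_def
      by (intro mult_left_mono kernel_bound[OF rd h(1) h(3) lo Dd adm pos C3 k0 g d1 d2 t xy]) (use C0 in auto)
    also have "\<dots> = A * H0 x y" unfolding A_def by simp
    finally show ?thesis .
  qed
  define q where "q = (1/2::real) powr \<beta>"
  have q1: "q < 1" unfolding q_def using powr_less_mono'[of "1/2::real" 0 \<beta>] b0 by simp
  define Ccol where "Ccol = 2 * (Dd / (1 - q))"
  have Ccol0: "0 < Ccol" unfolding Ccol_def using Dd0 q1 by simp
  have col: "(\<integral>\<^sup>+x. ennreal (H0 x y) \<partial>M) \<le> ennreal Ccol" for y
    unfolding H0_def Ccol_def q_def by (rule column[OF rd Dd g(1) b0])
  interpret sf: sigma_finite_measure M
  proof
    obtain x0 :: 'a where True by simp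
    show "\<exists>A. countable A \<and> A \<subseteq> sets M \<and> \<Union> A = space M \<and> (\<forall>a\<in>A. emeasure M a \<noteq> \<infinity>)"
    proof (intro exI conjI)
      show "countable (range (\<lambda>n::nat. ball x0 (real n + 1)))" by simp
      show "range (\<lambda>n::nat. ball x0 (real n + 1)) \<subseteq> sets M" using rd_ball_sets[OF rd] by blast
      show "\<Union> (range (\<lambda>n::nat. ball x0 (real n + 1))) = space M"
      proof -
        have "z \<in> (\<Union>n. ball x0 (real n + 1))" for z
        proof -
          obtain n :: nat where "dist x0 z < real n" using reals_Archimedean2 by blast
          then show ?thesis by (auto intro!: exI[of _ n])
        qed
        then show ?thesis using rd_space[OF rd] by auto
      qed
      show "\<forall>a\<in>range (\<lambda>n::nat. ball x0 (real n + 1)). emeasure M a \<noteq> \<infinity>"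
      proof
        fix b assume "b \<in> range (\<lambda>n::nat. ball x0 (real n + 1))"
        then obtain n :: nat where "b = ball x0 (real n + 1)" by auto
        moreover have "emeasure M (ball x0 (real n + 1)) < \<infinity>" using rd_ball_em[OF rd, of "real n + 1" x0] by simp
        ultimately show "emeasure M b \<noteq> \<infinity>" by simp
      qed
    qed
  qed
  interpret psf: pair_sigma_finite M M by (rule pair_sigma_finite.intro) (rule sf.sigma_finite_measure_axioms)+
  have ddm: "(\<lambda>p. dist (fst p) (snd p)) \<in> borel_measurable (M \<Otimes>\<^sub>M M)" by (rule dist_pair_meas[OF rd Dc Dd'])
  have mmm: "(\<lambda>p. measure M (ball (snd p) (dist (fst p) (snd p)))) \<in> borel_measurable (M \<Otimes>\<^sub>M M)"
    by (rule lsc_pair_meas[OF rd Dc Dd' ballmeas_open[OF rd]])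
  have ggm: "(\<lambda>p. g (snd p)) \<in> borel_measurable (M \<Otimes>\<^sub>M M)" by (rule measurable_compose[OF measurable_snd gm])
  show ?thesis
  proof (intro exI[of _ "A * Ccol"] conjI allI impI)
    show "0 < A * Ccol" using A0 Ccol0 by simp
    fix f :: "'a \<Rightarrow> real" assume fi: "integrable M f"
    have fm: "f \<in> borel_measurable M" using fi by simp
    have ffm: "(\<lambda>p. f (snd p)) \<in> borel_measurable (M \<Otimes>\<^sub>M M)" by (rule measurable_compose[OF measurable_snd fm])
    define K where "K = (\<lambda>x y. ennreal (A * H0 x y * \<bar>f y\<bar>))"
    have Km: "case_prod K \<in> borel_measurable (M \<Otimes>\<^sub>M M)"
    proof -
      have "(\<lambda>p. A * (min (dist (fst p) (snd p) / g (snd p)) (g (snd p) / dist (fst p) (snd p)) powr \<beta>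
          / measure M (ball (snd p) (dist (fst p) (snd p)))) * \<bar>f (snd p)\<bar>) \<in> borel_measurable (M \<Otimes>\<^sub>M M)"
        using ddm mmm ggm ffm by measurable
      then show ?thesis unfolding K_def H0_def case_prod_beta by measurable
    qed
    have pt: "(SUP t\<in>{0<..<\<rho> x}. ennreal \<bar>\<integral>y. (T t x y - Tt t x y) * f y \<partial>M\<bar>) \<le> (\<integral>\<^sup>+y. K x y \<partial>M)" for x
    proof (rule SUP_least)
      fix t assume "t \<in> {0<..<\<rho> x}"
      then have t: "0 < t" "t < \<rho> x" by auto
      have "ennreal \<bar>\<integral>y. (T t x y - Tt t x y) * f y \<partial>M\<bar> \<le> (\<integral>\<^sup>+y. ennreal (norm ((T t x y - Tt t x y) * f y)) \<partial>M)"
      proof (cases "integrable M (\<lambda>y. (T t x y - Tt t x y) * f y)")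
        case True
        from integral_norm_bound_ennreal[OF True] show ?thesis by simp
      next
        case False
        then show ?thesis by (simp add: not_integrable_integral_eq)
      qed
      also have "\<dots> \<le> (\<integral>\<^sup>+y. K x y \<partial>M)"
      proof (rule nn_integral_mono_AE)
        show "AE y in M. ennreal (norm ((T t x y - Tt t x y) * f y)) \<le> K x y"
          using AE_not_in[OF point_null[OF rd, of x]]
        proof (rule AE_mp, intro AE_I2 impI)
          fix y assume "y \<notin> {x}"
          then have xy: "x \<noteq> y" by auto
          have "norm ((T t x y - Tt t x y) * f y) = \<bar>T t x y - Tt t x y\<bar> * \<bar>f y\<bar>" by (simp add: abs_mult)
          also have "\<dots> \<le> A * H0 x y * \<bar>f y\<bar>" by (intro mult_right_mono kb[OF t xy]) auto
          finally show "ennreal (norm ((T t x y - Tt t x y) * f y)) \<le> K x y" unfolding K_def by (rule ennreal_leI)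
        qed
      qed
      finally show "ennreal \<bar>\<integral>y. (T t x y - Tt t x y) * f y \<partial>M\<bar> \<le> (\<integral>\<^sup>+y. K x y \<partial>M)" .
    qed
    have inner: "(\<integral>\<^sup>+x. K x y \<partial>M) \<le> ennreal (A * Ccol) * ennreal \<bar>f y\<bar>" for y
    proof -
      have Hm: "(\<lambda>x. ennreal (H0 x y)) \<in> borel_measurable M"
      proof -
        have "(\<lambda>x. K x y) \<in> borel_measurable M"
          using measurable_compose[OF measurable_Pair2'[of y M M] Km] rd_space[OF rd] by simp
        have "(\<lambda>x. H0 x y) \<in> borel_measurable M"
        proof -
          have "(\<lambda>x. (x,y)) \<in> measurable M (M \<Otimes>\<^sub>M M)" using measurable_Pair2'[of y M M] rd_space[OF rd] by simp
          from measurable_compose[OF this ddm] measurable_compose[OF this mmm] measurable_compose[OF this ggm]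
          have "(\<lambda>x. dist x y) \<in> borel_measurable M" "(\<lambda>x. measure M (ball y (dist x y))) \<in> borel_measurable M"
            "(\<lambda>x. g y) \<in> borel_measurable M" by auto
          then show ?thesis unfolding H0_def by measurable
        qed
        then show ?thesis by measurable
      qed
      have "(\<integral>\<^sup>+x. K x y \<partial>M) = (\<integral>\<^sup>+x. ennreal (A * \<bar>f y\<bar>) * ennreal (H0 x y) \<partial>M)"
        unfolding K_def
      proof (intro nn_integral_cong)
        fix x
        have "ennreal ((A*\<bar>f y\<bar>) * H0 x y) = ennreal (A*\<bar>f y\<bar>) * ennreal (H0 x y)"
          by (rule ennreal_mult) (use A0 H00 in auto)
        moreover have "A * H0 x y * \<bar>f y\<bar> = (A*\<bar>f y\<bar>) * H0 x y" by (simp add: mult_ac)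
        ultimately show "ennreal (A * H0 x y * \<bar>f y\<bar>) = ennreal (A*\<bar>f y\<bar>) * ennreal (H0 x y)" by metis
      qed
      also have "\<dots> = ennreal (A * \<bar>f y\<bar>) * (\<integral>\<^sup>+x. ennreal (H0 x y) \<partial>M)" by (rule nn_integral_cmult[OF Hm])
      also have "\<dots> \<le> ennreal (A * \<bar>f y\<bar>) * ennreal Ccol" by (intro mult_left_mono col) auto
      also have "\<dots> = ennreal (A * Ccol) * ennreal \<bar>f y\<bar>"
      proof -
        have "ennreal (A * \<bar>f y\<bar>) * ennreal Ccol = ennreal (A * \<bar>f y\<bar> * Ccol)"
          by (rule ennreal_mult[symmetric]) (use A0 Ccol0 in auto)
        also have "\<dots> = ennreal ((A * Ccol) * \<bar>f y\<bar>)" by (simp add: mult_ac)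
        also have "\<dots> = ennreal (A * Ccol) * ennreal \<bar>f y\<bar>"
          by (rule ennreal_mult) (use A0 Ccol0 in auto)
        finally show ?thesis .
      qed
      finally show ?thesis .
    qed
    have "(\<integral>\<^sup>+x. (SUP t\<in>{0<..<\<rho> x}. ennreal \<bar>\<integral>y. (T t x y - Tt t x y) * f y \<partial>M\<bar>) \<partial>M)
        \<le> (\<integral>\<^sup>+x. (\<integral>\<^sup>+y. K x y \<partial>M) \<partial>M)" by (intro nn_integral_mono pt)
    also have "\<dots> = (\<integral>\<^sup>+y. (\<integral>\<^sup>+x. K x y \<partial>M) \<partial>M)" by (rule psf.Fubini'[OF Km, symmetric])
    also have "\<dots> \<le> (\<integral>\<^sup>+y. ennreal (A * Ccol) * ennreal \<bar>f y\<bar> \<partial>M)" by (intro nn_integral_mono inner)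
    also have "\<dots> = ennreal (A * Ccol) * (\<integral>\<^sup>+y. ennreal \<bar>f y\<bar> \<partial>M)" by (rule nn_integral_cmult) (use fm in measurable)
    finally show "(\<integral>\<^sup>+x. (SUP t\<in>{0<..<\<rho> x}. ennreal \<bar>\<integral>y. (T t x y - Tt t x y) * f y \<partial>M\<bar>) \<partial>M)
      \<le> ennreal (A * Ccol) * (\<integral>\<^sup>+x. ennreal \<bar>f x\<bar> \<partial>M)" .
  qed
qed


end
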